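(* Let $K$ be an almost real closed field and let $p$ be a prime. Consider the formulae in the language of rings $\{+,\cdot\}$ (with constants $0,1$) \[\psi_p(x) := \big[\neg\exists y\colon (y^p = x \vee y^p = -x)\big] \wedge \big[\exists z\colon z^p = 1+x\big],\] \[\varphi_p(x) := \psi_p(x) \vee \big[\exists y\colon (y^p = x \vee y^p = -x) \wedge (\forall z\colon \psi_p(z) \rightarrow \psi_p(xz))\big] \vee x = 0.\] Then $\varphi_p(K) = \mathcal O_{v_p}$; in particular the valuation $v_p$ is definable in $(K,+,\cdot)$ (even without parameters).
   Context: A field $K$ is almost real closed if it admits a henselian valuation whose residue field is real closed; such a field is formally real. On a formally real field the henselian valuations are linearly ordered by inclusion of valuation rings, and the canonical henselian valuation $v_K$ is the finest one (its valuation ring is the smallest). Write $G := v_K(K^\times)$, an ordered abelian group written additively. For a convex subgroup $\Delta\subseteq G$ let $v_\Delta$ be the coarsening of $v_K$ given by $a\mapsto v_K(a)+\Delta \in G/\Delta$; every $v_\Delta$ is henselian and $\Delta\mapsto v_\Delta$ is a bijection between convex subgroups of $G$ and henselian valuations on $K$. For a prime $p$, $G_p$ denotes the maximal convex $p$-divisible subgroup of $G$, and $v_p := v_{G_p}$. $\mathcal O_v$ denotes the valuation ring of a valuation $v$. *)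

theory Defs
  imports "HOL-Computational_Algebra.Polynomial"
begin

definition is_valuation_ring :: "'a::field set \<Rightarrow> bool" where
  "is_valuation_ring R \<longleftrightarrow>
     0 \<in> R \<and> 1 \<in> R \<and>
     (\<forall>x\<in>R. \<forall>y\<in>R. x + y \<in> R \<and> x * y \<in> R \<and> - x \<in> R) \<and>
     (\<forall>x. x \<noteq> 0 \<longrightarrow> x \<in> R \<or> inverse x \<in> R)"

definition max_ideal :: "'a::field set \<Rightarrow> 'a set" where
  "max_ideal R = {x \<in> R. x = 0 \<or> inverse x \<notin> R}"

definition henselian :: "'a::field set \<Rightarrow> bool" where
  "henselian R \<longleftrightarrow> is_valuation_ring R \<and>
     (\<forall>f a. (\<forall>i. coeff f i \<in> R) \<longrightarrow> lead_coeff f = 1 \<longrightarrow> a \<in> R \<longrightarrow>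
        poly f a \<in> max_ideal R \<longrightarrow> poly (pderiv f) a \<notin> max_ideal R \<longrightarrow>
        (\<exists>b\<in>R. poly f b = 0 \<and> b - a \<in> max_ideal R))"

text \<open>The residue field R/m is real closed: it is formally real (-1 is not a sum of squares),
  for every element x either x or -x is a square, and every odd-degree polynomial has a root.\<close>
definition residue_real_closed :: "'a::field set \<Rightarrow> bool" where
  "residue_real_closed R \<longleftrightarrow>
     (\<forall>(n::nat) (g::nat \<Rightarrow> 'a). (\<forall>i<n. g i \<in> R) \<longrightarrow> (\<Sum>i<n. (g i)^2) \<in> max_ideal R
          \<longrightarrow> (\<forall>i<n. g i \<in> max_ideal R)) \<and>
     (\<forall>x\<in>R. \<exists>y\<in>R. y^2 - x \<in> max_ideal R \<or> y^2 + x \<in> max_ideal R) \<and>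
     (\<forall>f. (\<forall>i. coeff f i \<in> R) \<longrightarrow> lead_coeff f = 1 \<longrightarrow> odd (degree f) \<longrightarrow>
          (\<exists>a\<in>R. poly f a \<in> max_ideal R))"

definition almost_real_closed :: "'a::field itself \<Rightarrow> bool" where
  "almost_real_closed _ \<longleftrightarrow> (\<exists>R::'a set. henselian R \<and> residue_real_closed R)"

definition canonical_henselian_ring :: "'a::field set \<Rightarrow> bool" where
  "canonical_henselian_ring R \<longleftrightarrow> henselian R \<and>
     (\<forall>R'. henselian R' \<longrightarrow> R \<subseteq> R')"

definition valuation :: "('a::field \<Rightarrow> 'g::linordered_ab_group_add) \<Rightarrow> bool" where
  "valuation v \<longleftrightarrow>
     (\<forall>x y. x \<noteq> 0 \<longrightarrow> y \<noteq> 0 \<longrightarrow> v (x * y) = v x + v y) \<and>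
     (\<forall>x y. x \<noteq> 0 \<longrightarrow> y \<noteq> 0 \<longrightarrow> x + y \<noteq> 0 \<longrightarrow> min (v x) (v y) \<le> v (x + y))"

definition val_ring :: "('a::field \<Rightarrow> 'g::linordered_ab_group_add) \<Rightarrow> 'a set" where
  "val_ring v = {x. x = 0 \<or> 0 \<le> v x}"

definition value_group :: "('a::field \<Rightarrow> 'g::linordered_ab_group_add) \<Rightarrow> 'g set" where
  "value_group v = v ` {x. x \<noteq> 0}"

definition nsmul :: "nat \<Rightarrow> 'g::ab_group_add \<Rightarrow> 'g" where
  "nsmul n b = (((+) b) ^^ n) 0"

definition convex_subgroup :: "'g::linordered_ab_group_add set \<Rightarrow> 'g set \<Rightarrow> bool" where
  "convex_subgroup G D \<longleftrightarrow> D \<subseteq> G \<and> 0 \<in> D \<and>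
     (\<forall>a\<in>D. \<forall>b\<in>D. a + b \<in> D \<and> - a \<in> D) \<and>
     (\<forall>a\<in>D. \<forall>g\<in>G. 0 \<le> g \<and> g \<le> a \<longrightarrow> g \<in> D)"

definition p_divisible :: "nat \<Rightarrow> 'g::ab_group_add set \<Rightarrow> bool" where
  "p_divisible p D \<longleftrightarrow> (\<forall>a\<in>D. \<exists>b\<in>D. nsmul p b = a)"

text \<open>Maximal convex p-divisible subgroup (the convex subgroups form a chain, so the union of all
  convex p-divisible subgroups is the largest one).\<close>
definition max_convex_pdiv :: "nat \<Rightarrow> 'g::linordered_ab_group_add set \<Rightarrow> 'g set" where
  "max_convex_pdiv p G = \<Union>{D. convex_subgroup G D \<and> p_divisible p D}"

text \<open>Valuation ring of the coarsening v_Delta: a \<mapsto> v a + Delta.\<close>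
definition coarsening_ring ::
  "('a::field \<Rightarrow> 'g::linordered_ab_group_add) \<Rightarrow> 'g set \<Rightarrow> 'a set" where
  "coarsening_ring v D = {x. x = 0 \<or> 0 \<le> v x \<or> v x \<in> D}"

definition psi_p :: "nat \<Rightarrow> 'a::field \<Rightarrow> bool" where
  "psi_p p x \<longleftrightarrow> \<not> (\<exists>y. y ^ p = x \<or> y ^ p = - x) \<and> (\<exists>z. z ^ p = 1 + x)"

definition phi_p :: "nat \<Rightarrow> 'a::field \<Rightarrow> bool" where
  "phi_p p x \<longleftrightarrow> psi_p p x \<or>
     (\<exists>y. (y ^ p = x \<or> y ^ p = - x) \<and> (\<forall>z. psi_p p z \<longrightarrow> psi_p p (x * z))) \<or> x = 0"

end

theory Submission
  imports Defs "HOL-Computational_Algebra.Primes"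
begin


lemma vr_basic:
  assumes "is_valuation_ring R"
  shows "0 \<in> R" "1 \<in> R" "x\<in>R \<Longrightarrow> y\<in>R \<Longrightarrow> x+y\<in>R" "x\<in>R \<Longrightarrow> y\<in>R \<Longrightarrow> x*y\<in>R"
    "x\<in>R \<Longrightarrow> -x\<in>R" "x \<noteq> 0 \<Longrightarrow> x \<in> R \<or> inverse x \<in> R"
  using assms unfolding is_valuation_ring_def by auto

lemma vr_diff: "is_valuation_ring R \<Longrightarrow> x\<in>R \<Longrightarrow> y\<in>R \<Longrightarrow> x - y \<in> R"
  using vr_basic[of R] by (metis diff_conv_add_uminus)

lemma vr_pow: "is_valuation_ring R \<Longrightarrow> x\<in>R \<Longrightarrow> x^n \<in> R"
  by (induction n) (auto intro: vr_basic)

lemma vr_of_nat: "is_valuation_ring R \<Longrightarrow> of_nat n \<in> R"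
  by (induction n) (auto intro: vr_basic)

lemma mi_iff: "x \<in> max_ideal R \<longleftrightarrow> x \<in> R \<and> (x = 0 \<or> inverse x \<notin> R)"
  unfolding max_ideal_def by auto

lemma one_not_mi: "1 \<notin> max_ideal R"
  unfolding max_ideal_def by auto

lemma mi_mult:
  assumes R: "is_valuation_ring R" and x: "x \<in> max_ideal R" and r: "r \<in> R"
  shows "r * x \<in> max_ideal R"
proof -
  have xR: "x \<in> R" using x mi_iff by blast
  have rx: "r * x \<in> R" using vr_basic(4)[OF R r xR] .
  show ?thesis
  proof (cases "r * x = 0")
    case True then show ?thesis using rx mi_iff by blast
  next
    case False
    then have "r \<noteq> 0" "x \<noteq> 0" by auto
    then have ix: "inverse x \<notin> R" using x mi_iff by blast
    have "inverse (r*x) \<notin> R"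
    proof
      assume "inverse (r*x) \<in> R"
      then have "r * inverse (r*x) \<in> R" using vr_basic(4)[OF R r] by blast
      moreover have "r * inverse (r*x) = inverse x" using \<open>r \<noteq> 0\<close> \<open>x\<noteq>0\<close>
        by (simp add: nonzero_inverse_mult_distrib mult.assoc[symmetric])
      ultimately show False using ix by (simp only:)
    qed
    then show ?thesis using rx mi_iff by blast
  qed
qed

lemma mi_R: "x \<in> max_ideal R \<Longrightarrow> x \<in> R" using mi_iff by blast

lemma mi_add:
  assumes R: "is_valuation_ring R" and x: "x \<in> max_ideal R" and y: "y \<in> max_ideal R"
  shows "x + y \<in> max_ideal R"
proof (cases "x = 0 \<or> y = 0")
  case True then show ?thesis using x y by auto
next
  case False
  then have nz: "x \<noteq> 0" "y \<noteq> 0" by auto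
  have "x / y \<noteq> 0" using nz by simp
  then have "x / y \<in> R \<or> inverse (x/y) \<in> R" using vr_basic(6)[OF R] by blast
  then show ?thesis
  proof
    assume "x / y \<in> R"
    then have "1 + x/y \<in> R" using vr_basic[OF R] by blast
    then have "(1 + x/y) * y \<in> max_ideal R" using mi_mult[OF R y] by blast
    moreover have "(1 + x/y) * y = x + y" using nz by (simp add: field_simps)
    ultimately show ?thesis by simp
  next
    assume "inverse (x/y) \<in> R"
    then have "y / x \<in> R" by (simp add: inverse_eq_divide)
    then have "1 + y/x \<in> R" using vr_basic[OF R] by blast
    then have "(1 + y/x) * x \<in> max_ideal R" using mi_mult[OF R x] by blast
    moreover have "(1 + y/x) * x = x + y" using nz by (simp add: field_simps)
    ultimately show ?thesis by simp
  qed
qed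

lemma mi_neg:
  assumes R: "is_valuation_ring R" and x: "x \<in> max_ideal R"
  shows "- x \<in> max_ideal R"
  using mi_mult[OF R x, of "-1"] vr_basic[OF R] by simp

lemma mi_diff:
  assumes R: "is_valuation_ring R" and x: "x \<in> max_ideal R" and y: "y \<in> max_ideal R"
  shows "x - y \<in> max_ideal R"
  using mi_add[OF R x mi_neg[OF R y]] by simp

lemma unit_mult:
  assumes R: "is_valuation_ring R" "x\<in>R" "y\<in>R" "x \<notin> max_ideal R" "y \<notin> max_ideal R"
  shows "x * y \<notin> max_ideal R"
proof -
  have "x \<noteq> 0" "inverse x \<in> R" "y \<noteq> 0" "inverse y \<in> R" using assms mi_iff by blast+
  then show ?thesis using vr_basic(4)[OF R(1), of "inverse x" "inverse y"]
    by (simp add: mi_iff nonzero_inverse_mult_distrib mult.commute)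
qed

lemma unit_pow:
  assumes R: "is_valuation_ring R" "x\<in>R" "x \<notin> max_ideal R"
  shows "x ^ n \<notin> max_ideal R"
proof (induction n)
  case 0 then show ?case using one_not_mi by simp
next
  case (Suc n) then show ?case using unit_mult[OF R(1) R(2) vr_pow[OF R(1) R(2)] R(3)] by simp
qed

lemma henselian_vr: "henselian R \<Longrightarrow> is_valuation_ring R"
  unfolding henselian_def by blast

lemma hensel_rule:
  assumes "henselian R"
  shows "(\<forall>i. coeff f i \<in> R) \<Longrightarrow> lead_coeff f = 1 \<Longrightarrow> a \<in> R \<Longrightarrow>
        poly f a \<in> max_ideal R \<Longrightarrow> poly (pderiv f) a \<notin> max_ideal R \<Longrightarrow>
        (\<exists>b\<in>R. poly f b = 0 \<and> b - a \<in> max_ideal R)"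
  using assms unfolding henselian_def by blast

lemma hensel_root:
  assumes H: "henselian R" and c: "c \<in> R" and a: "a \<in> R" and fa: "a^p - c \<in> max_ideal R"
    and an: "a \<notin> max_ideal R" and pn: "of_nat p \<notin> max_ideal R" and p1: "p \<ge> 1"
  shows "\<exists>b. b^p = c"
proof -
  have R: "is_valuation_ring R" using H henselian_vr by blast
  define f where "f = monom 1 p + [:-c:]"
  have cf: "coeff f i \<in> R" for i
    using vr_basic[OF R] c p1 unfolding f_def
    by (cases i) (auto simp: coeff_monom)
  have dg: "degree f = p" unfolding f_def
    by (subst degree_add_eq_left) (use p1 in \<open>auto simp: degree_monom_eq\<close>)
  have lc: "lead_coeff f = 1" unfolding dg using p1 unfolding f_def
    by (cases p) (auto simp: coeff_monom)
  have pf: "poly f x = x^p - c" for x unfolding f_def by (simp add: poly_monom)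
  have pdf: "poly (pderiv f) x = of_nat p * x^(p-1)" for x
    unfolding f_def by (simp add: pderiv_add pderiv_monom poly_monom pderiv_pCons)
  have "poly (pderiv f) a \<notin> max_ideal R"
    unfolding pdf using unit_mult[OF R vr_of_nat[OF R] vr_pow[OF R a] pn unit_pow[OF R a an]] .
  moreover have "poly f a \<in> max_ideal R" using fa pf by simp
  ultimately have "\<exists>b\<in>R. poly f b = 0 \<and> b - a \<in> max_ideal R"
    using hensel_rule[OF H] cf lc a by blast
  then obtain b where "poly f b = 0" by blast
  then show ?thesis unfolding pf by auto
qed



lemma max_index:
  fixes c :: "nat \<Rightarrow> 'a::field" and R :: "'a set"
  assumes R: "is_valuation_ring R"
  shows "\<exists>j<Suc n. \<forall>i<Suc n. c i = 0 \<or> (c j \<noteq> 0 \<and> c i / c j \<in> R)"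
proof (induction n)
  case 0
  then show ?case using vr_basic(2)[OF R] by auto
next
  case (Suc n)
  then obtain j where j: "j < Suc n" "\<forall>i<Suc n. c i = 0 \<or> (c j \<noteq> 0 \<and> c i / c j \<in> R)" by blast
  show ?case
  proof (cases "c (Suc n) = 0")
    case True
    then show ?thesis using j by (metis less_Suc_eq)
  next
    case cn: False
    show ?thesis
    proof (cases "c j = 0")
      case True
      then have "\<forall>i<Suc n. c i = 0" using j by auto
      then show ?thesis using cn vr_basic(2)[OF R] by (intro exI[of _ "Suc n"]) (auto simp: less_Suc_eq)
    next
      case cj: False
      have "c (Suc n) / c j \<noteq> 0" using cn cj by simp
      then have "c (Suc n) / c j \<in> R \<or> inverse (c (Suc n) / c j) \<in> R" using vr_basic(6)[OF R] by blast
      then show ?thesis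
      proof
        assume "c (Suc n) / c j \<in> R"
        then show ?thesis using j cj by (intro exI[of _ j]) (auto simp: less_Suc_eq)
      next
        assume "inverse (c (Suc n) / c j) \<in> R"
        then have q: "c j / c (Suc n) \<in> R" by simp
        have "\<forall>i<Suc (Suc n). c i = 0 \<or> (c (Suc n) \<noteq> 0 \<and> c i / c (Suc n) \<in> R)"
        proof (intro allI impI)
          fix i assume i: "i < Suc (Suc n)"
          show "c i = 0 \<or> (c (Suc n) \<noteq> 0 \<and> c i / c (Suc n) \<in> R)"
          proof (cases "i = Suc n")
            case True then show ?thesis using cn vr_basic(2)[OF R] by simp
          next
            case False
            then have "i < Suc n" using i by simp
            then have "c i = 0 \<or> c i / c j \<in> R" using j by blast
            moreover have eq: "c i / c (Suc n) = (c i / c j) * (c j / c (Suc n))" using cj by simp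
            ultimately show ?thesis using vr_basic(4)[OF R, of "c i / c j" "c j / c (Suc n)"] q cn
              by metis
          qed
        qed
        then show ?thesis by blast
      qed
    qed
  qed
qed

lemma rrc_sos:
  fixes g :: "nat \<Rightarrow> 'a::field" and n :: nat
  assumes "residue_real_closed R" "\<forall>i<n. g i \<in> R" "(\<Sum>i<n. (g i)^2) \<in> max_ideal R"
  shows "\<forall>i<n. g i \<in> max_ideal R"
proof -
  have "\<forall>(n::nat) (g::nat \<Rightarrow> 'a). (\<forall>i<n. g i \<in> R) \<longrightarrow> (\<Sum>i<n. (g i)^2) \<in> max_ideal R
          \<longrightarrow> (\<forall>i<n. g i \<in> max_ideal R)" using assms(1) unfolding residue_real_closed_def by blast
  then show ?thesis using assms(2,3) by blast
qed

lemma sos_zero: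
  fixes n :: nat and c :: "nat \<Rightarrow> 'a::field" and R :: "'a set"
  assumes R: "is_valuation_ring R" and rc: "residue_real_closed R" and s: "(\<Sum>i<n. (c i)^2) = 0"
  shows "\<forall>i<n. c i = 0"
proof (cases n)
  case 0 then show ?thesis by simp
next
  case (Suc m)
  obtain j where j: "j < Suc m" "\<forall>i<Suc m. c i = 0 \<or> (c j \<noteq> 0 \<and> c i / c j \<in> R)"
    using max_index[OF R] by blast
  show ?thesis
  proof (cases "c j = 0")
    case True then show ?thesis using j Suc by auto
  next
    case False
    define g where "g i = c i / c j" for i
    have gR: "\<forall>i<n. g i \<in> R" using j Suc vr_basic(1)[OF R] unfolding g_def by auto
    have "(\<Sum>i<n. (g i)^2) = (\<Sum>i<n. (c i)^2) / (c j)^2"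
      unfolding g_def by (simp add: sum_divide_distrib power_divide)
    also have "\<dots> = 0" using s by simp
    finally have "(\<Sum>i<n. (g i)^2) \<in> max_ideal R" using vr_basic(1)[OF R] by (simp add: mi_iff)
    then have "g j \<in> max_ideal R" using rrc_sos[OF rc gR] j Suc by auto
    moreover have "g j = 1" using False unfolding g_def by simp
    ultimately show ?thesis using one_not_mi by metis
  qed
qed

lemma char_ok:
  fixes Q R :: "'a::field set"
  assumes hQ: "henselian Q" and hR: "henselian R" and rc: "residue_real_closed R"
    and p: "prime (p::nat)"
  shows "of_nat p \<notin> max_ideal Q"
proof
  assume pm: "of_nat p \<in> max_ideal Q"
  have Q: "is_valuation_ring Q" using hQ henselian_vr by blast
  have R: "is_valuation_ring R" using hR henselian_vr by blast
  have p2: "p \<ge> 2" using p prime_ge_2_nat by blast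
  show False
  proof (cases "p = 2")
    case True
    define f :: "'a poly" where "f = [:2, -1, 1:]"
    have cf: "\<forall>i. coeff f i \<in> Q"
    proof
      fix i show "coeff f i \<in> Q" unfolding f_def
        using vr_basic[OF Q] vr_of_nat[OF Q, of 2]
        by (cases i; cases "i - 1"; auto simp: coeff_pCons split: nat.splits)
    qed
    have lc: "lead_coeff f = 1" unfolding f_def by simp
    have "poly f 0 \<in> max_ideal Q" using pm True unfolding f_def by simp
    moreover have "poly (pderiv f) 0 \<notin> max_ideal Q"
      using mi_neg[OF Q, of "-1"] one_not_mi unfolding f_def by (auto simp: pderiv_pCons)
    ultimately obtain b where b: "poly f b = 0"
      using hensel_rule[OF hQ] cf lc vr_basic(1)[OF Q] by blast
    then have b2: "b^2 = b - 2" unfolding f_def by (simp add: algebra_simps power2_eq_square)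
    define c :: "nat \<Rightarrow> 'a" where "c i = (if i < 3 then 1 else if i = 3 then 2 else 2*b - 1)" for i
    have "(\<Sum>i<5. (c i)^2) = 8 + 4 * (b^2 - b)"
      by (simp add: numeral_eq_Suc c_def algebra_simps power2_eq_square)
    also have "\<dots> = 0" using b2 by simp
    finally have "\<forall>i<5. c i = 0" using sos_zero[OF R rc] by blast
    then have "c 0 = 0" by simp
    then show False unfolding c_def by simp
  next
    case False
    then have odd: "odd p" using p p2 prime_odd_nat by (metis le_neq_implies_less)
    then obtain k where k: "p = 2*k + 1" using oddE by blast
    have two: "(2::'a) \<notin> max_ideal Q"
    proof
      assume t: "(2::'a) \<in> max_ideal Q"
      have "of_nat p - of_nat k * 2 \<in> max_ideal Q"
        using mi_diff[OF Q pm mi_mult[OF Q t vr_of_nat[OF Q, of k]]] .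
      moreover have "of_nat p - of_nat k * 2 = (1::'a)" using k by simp
      ultimately show False using one_not_mi by metis
    qed
    define f :: "'a poly" where "f = [:of_nat p - 1, 0, 1:]"
    have cf: "\<forall>i. coeff f i \<in> Q"
    proof
      fix i show "coeff f i \<in> Q" unfolding f_def
        using vr_basic[OF Q] vr_diff[OF Q vr_of_nat[OF Q, of p] vr_basic(2)[OF Q]]
        by (cases i; cases "i - 1"; auto simp: coeff_pCons split: nat.splits)
    qed
    have lc: "lead_coeff f = 1" unfolding f_def by simp
    have "poly f 1 \<in> max_ideal Q" using pm unfolding f_def by simp
    moreover have "poly (pderiv f) 1 \<notin> max_ideal Q"
      using two unfolding f_def by (auto simp: pderiv_pCons)
    ultimately obtain t where t: "poly f t = 0"
      using hensel_rule[OF hQ] cf lc vr_basic(2)[OF Q] by blast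
    then have t2: "of_nat p - 1 + t^2 = 0" unfolding f_def by (simp add: algebra_simps power2_eq_square)
    define c :: "nat \<Rightarrow> 'a" where "c i = (if i < p - 1 then 1 else t)" for i
    have pS: "p = Suc (p - 1)" using p2 by simp
    have "(\<Sum>i<p. (c i)^2) = (\<Sum>i<p-1. (c i)^2) + t^2"
      by (subst pS) (simp add: c_def)
    also have "(\<Sum>i<p-1. (c i)^2) = of_nat (p - 1)" by (simp add: c_def)
    also have "of_nat (p - 1) = (of_nat p - 1 :: 'a)" using p2 by (simp add: of_nat_diff)
    finally have "(\<Sum>i<p. (c i)^2) = 0" using t2 by simp
    then have "\<forall>i<p. c i = 0" using sos_zero[OF R rc] by blast
    then have "c 0 = 0" using p2 by simp
    then show False unfolding c_def using p2 by simp
  qed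
qed



lemma nsmul_0[simp]: "nsmul 0 b = 0" unfolding nsmul_def by simp
lemma nsmul_Suc[simp]: "nsmul (Suc n) b = b + nsmul n b" unfolding nsmul_def by simp
lemma nsmul_add: "nsmul n (a + b) = nsmul n a + nsmul n (b::'g::ab_group_add)"
  by (induction n) (simp_all add: algebra_simps)
lemma nsmul_neg: "nsmul n (-a) = - nsmul n (a::'g::ab_group_add)"
  by (induction n) (simp_all add: algebra_simps)
lemma nsmul_zero[simp]: "nsmul n (0::'g::ab_group_add) = 0"
  by (induction n) simp_all
lemma nsmul_nonneg: "0 \<le> b \<Longrightarrow> 0 \<le> nsmul n (b::'g::linordered_ab_group_add)"
  by (induction n) simp_all
lemma nsmul_ge: "0 \<le> b \<Longrightarrow> 1 \<le> n \<Longrightarrow> b \<le> nsmul n (b::'g::linordered_ab_group_add)"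
  by (cases n) (auto intro: nsmul_nonneg)

lemma cs_sub: "convex_subgroup G D \<Longrightarrow> D \<subseteq> G"
  unfolding convex_subgroup_def by (elim conjE)
lemma cs_neg: "convex_subgroup G D \<Longrightarrow> a \<in> D \<Longrightarrow> -a \<in> D"
  unfolding convex_subgroup_def by simp
lemma cs_conv: "convex_subgroup G D \<Longrightarrow> a \<in> D \<Longrightarrow> g \<in> G \<Longrightarrow> 0 \<le> g \<Longrightarrow> g \<le> a \<Longrightarrow> g \<in> D"
  unfolding convex_subgroup_def by simp

definition Pd :: "nat \<Rightarrow> 'g::ab_group_add set \<Rightarrow> 'g \<Rightarrow> bool" where
  "Pd p G g \<longleftrightarrow> (\<exists>h\<in>G. nsmul p h = g)"

locale grp =
  fixes G :: "'g::linordered_ab_group_add set" and p :: nat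
  assumes G0: "0 \<in> G" and Gadd: "a \<in> G \<Longrightarrow> b \<in> G \<Longrightarrow> a + b \<in> G"
    and Gneg: "a \<in> G \<Longrightarrow> -a \<in> G" and p1: "p \<ge> 1"
begin

lemma Gdiff: "a \<in> G \<Longrightarrow> b \<in> G \<Longrightarrow> a - b \<in> G"
  using Gadd[OF _ Gneg, of a b] by simp

lemma P0: "Pd p G 0" unfolding Pd_def using G0 by force

lemma Padd: "Pd p G a \<Longrightarrow> Pd p G b \<Longrightarrow> Pd p G (a + b)"
proof -
  assume "Pd p G a" "Pd p G b"
  then obtain h k where "h \<in> G" "nsmul p h = a" "k \<in> G" "nsmul p k = b" unfolding Pd_def by blast
  then show ?thesis unfolding Pd_def using Gadd[of h k] nsmul_add[of p h k] by blast
qed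

lemma Pneg: "Pd p G a \<Longrightarrow> Pd p G (-a)"
proof -
  assume "Pd p G a"
  then obtain h where "h \<in> G" "nsmul p h = a" unfolding Pd_def by blast
  then show ?thesis unfolding Pd_def using Gneg[of h] nsmul_neg[of p h] by blast
qed

lemma Pdiff: assumes "Pd p G a" "Pd p G b" shows "Pd p G (a - b)"
proof -
  have "Pd p G (a + - b)" by (rule Padd[OF assms(1) Pneg[OF assms(2)]])
  then show ?thesis by simp
qed

lemma PD: "a \<in> max_convex_pdiv p G \<Longrightarrow> Pd p G a"
proof -
  assume "a \<in> max_convex_pdiv p G"
  then have "a \<in> \<Union>{D. convex_subgroup G D \<and> p_divisible p D}" unfolding max_convex_pdiv_def .
  then obtain D where "D \<in> {D. convex_subgroup G D \<and> p_divisible p D}" "a \<in> D" by (rule UnionE)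
  then have D: "convex_subgroup G D" "p_divisible p D" "a \<in> D" by auto
  from D(2) have "\<forall>a\<in>D. \<exists>b\<in>D. nsmul p b = a" unfolding p_divisible_def .
  then obtain b where "b \<in> D" "nsmul p b = a" using D(3) by blast
  moreover have "D \<subseteq> G" using D(1) by (rule cs_sub)
  ultimately show ?thesis unfolding Pd_def by blast
qed

lemma GL2:
  assumes a: "a \<in> G"
  shows "(\<forall>g\<in>G. 0 < g \<and> \<not> Pd p G g \<longrightarrow> 0 < a + g) \<longleftrightarrow> (0 \<le> a \<or> a \<in> max_convex_pdiv p G)"
proof
  assume L: "\<forall>g\<in>G. 0 < g \<and> \<not> Pd p G g \<longrightarrow> 0 < a + g"
  show "0 \<le> a \<or> a \<in> max_convex_pdiv p G"
  proof (cases "0 \<le> a")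
    case True then show ?thesis by simp
  next
    case False
    define c where "c = - a"
    have c0: "0 < c" using False unfolding c_def by simp
    have cG: "c \<in> G" using Gneg a unfolding c_def by simp
    have hyp: "Pd p G g" if "g \<in> G" "0 < g" "g \<le> c" for g
    proof (rule ccontr)
      assume "\<not> Pd p G g"
      then have "0 < a + g" using L that by blast
      moreover have "a + g \<le> 0" using add_left_mono[OF that(3), of a] unfolding c_def by simp
      ultimately show False by simp
    qed
    have Pn: "\<forall>g\<in>G. 0 \<le> g \<longrightarrow> g \<le> nsmul n c \<longrightarrow> Pd p G g" for n
    proof (induction n)
      case 0 then show ?case using P0 by (auto simp: antisym)
    next
      case (Suc n)
      show ?case
      proof (intro ballI impI)
        fix g assume g: "g \<in> G" "0 \<le> g" "g \<le> nsmul (Suc n) c"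
        show "Pd p G g"
        proof (cases "g \<le> c")
          case True
          then show ?thesis using hyp g P0 by (cases "g = 0") auto
        next
          case False
          have "0 \<le> g - c" using False by simp
          moreover have "g - c \<le> nsmul n c" using g(3) by (simp add: algebra_simps)
          ultimately have "Pd p G (g - c)" using Suc.IH Gdiff[OF g(1) cG] by blast
          moreover have "Pd p G c" using hyp cG c0 by simp
          ultimately show ?thesis using Padd by fastforce
        qed
      qed
    qed
    define C where "C = {g \<in> G. \<exists>n. g \<le> nsmul n c \<and> - g \<le> nsmul n c}"
    have cC: "c \<in> C" unfolding C_def using cG c0 by (intro CollectI conjI exI[of _ 1]) auto
    have nsc: "0 \<le> nsmul n c" for n using c0 nsmul_nonneg[of c n] by simp
    have convC: "convex_subgroup G C"
      unfolding convex_subgroup_def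
    proof (intro conjI ballI impI)
      show "C \<subseteq> G" unfolding C_def by blast
      show "0 \<in> C" unfolding C_def using G0 nsc by auto
    next
      fix x y assume x: "x \<in> C" and y: "y \<in> C"
      then obtain n m where n: "x \<le> nsmul n c" "-x \<le> nsmul n c" and m: "y \<le> nsmul m c" "-y \<le> nsmul m c"
        unfolding C_def by blast
      have "nsmul (n + m) c = nsmul n c + nsmul m c" by (induction n) (simp_all add: algebra_simps)
      moreover have "x + y \<le> nsmul n c + nsmul m c" using add_mono[OF n(1) m(1)] .
      moreover have "-(x + y) \<le> nsmul n c + nsmul m c" using add_mono[OF n(2) m(2)] by simp
      moreover have "x + y \<in> G" using x y Gadd unfolding C_def by blast
      ultimately show "x + y \<in> C" unfolding C_def
        by (intro CollectI conjI exI[of _ "n+m"]) auto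
      show "- x \<in> C" using x Gneg unfolding C_def by auto
    next
      fix x g assume x: "x \<in> C" and g: "g \<in> G" and gx: "0 \<le> g \<and> g \<le> x"
      then obtain n where n: "x \<le> nsmul n c" unfolding C_def by blast
      moreover have "- g \<le> nsmul n c" using gx nsc[of n] by (meson neg_le_0_iff_le order_trans)
      ultimately show "g \<in> C" unfolding C_def using g gx by (intro CollectI conjI exI[of _ n]) auto
    qed
    have pdC: "p_divisible p C"
      unfolding p_divisible_def
    proof
      fix x assume x: "x \<in> C"
      then obtain n where n: "x \<le> nsmul n c" "-x \<le> nsmul n c" and xG: "x \<in> G" unfolding C_def by blast
      have "Pd p G x"
      proof (cases "0 \<le> x")
        case True then show ?thesis using Pn n xG by blast
      next
        case False
        then have "Pd p G (-x)" using Pn n xG Gneg by simp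
        then show ?thesis using Pneg by fastforce
      qed
      then obtain b where b: "b \<in> G" "nsmul p b = x" unfolding Pd_def by blast
      have "b \<le> nsmul n c \<and> -b \<le> nsmul n c"
      proof (cases "0 \<le> b")
        case True
        then have "b \<le> x" using nsmul_ge[OF True p1] b by simp
        then show ?thesis using n True nsc[of n] by (meson neg_le_0_iff_le order_trans)
      next
        case False
        then have "-b \<le> nsmul p (-b)" using nsmul_ge[of "-b" p] p1 by simp
        moreover have "nsmul p (-b) = -x" using b(2) nsmul_neg[of p b] by simp
        ultimately have "-b \<le> -x" by simp
        then have 1: "-b \<le> nsmul n c" using n(2) by (rule order_trans)
        have "b \<le> 0" using False by simp
        then have "b \<le> nsmul n c" using nsc[of n] by (rule order_trans)
        then show ?thesis using 1 by simp
      qed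
      then have "b \<in> C" unfolding C_def using b by blast
      then show "\<exists>b\<in>C. nsmul p b = x" using b by blast
    qed
    have "-c \<in> C" using convC cC by (rule cs_neg)
    then have "a \<in> C" unfolding c_def by simp
    then have "a \<in> \<Union>{D. convex_subgroup G D \<and> p_divisible p D}" using convC pdC by blast
    then have "a \<in> max_convex_pdiv p G" unfolding max_convex_pdiv_def .
    then show ?thesis by simp
  qed
next
  assume R: "0 \<le> a \<or> a \<in> max_convex_pdiv p G"
  show "\<forall>g\<in>G. 0 < g \<and> \<not> Pd p G g \<longrightarrow> 0 < a + g"
  proof (intro ballI impI)
    fix g assume g: "g \<in> G" "0 < g \<and> \<not> Pd p G g"
    show "0 < a + g"
    proof (rule ccontr)
      assume ng: "\<not> 0 < a + g"
      then have "\<not> 0 \<le> a" using g add_nonneg_pos by blast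
      then have "a \<in> max_convex_pdiv p G" using R by simp
      then have "a \<in> \<Union>{D. convex_subgroup G D \<and> p_divisible p D}" unfolding max_convex_pdiv_def .
      then obtain D' where "D' \<in> {D. convex_subgroup G D \<and> p_divisible p D}" "a \<in> D'" by (rule UnionE)
      then have D': "convex_subgroup G D'" "p_divisible p D'" "a \<in> D'" by auto
      then have "-a \<in> D'" using cs_neg by blast
      moreover have "g \<le> -a"
      proof -
        have "a + g \<le> 0" using ng by simp
        then have "-a + (a + g) \<le> -a + 0" by (rule add_left_mono)
        then show ?thesis by (simp add: add.assoc[symmetric])
      qed
      ultimately have "g \<in> D'" using cs_conv[OF D'(1) _ g(1)] g(2) by auto
      then have "g \<in> \<Union>{D. convex_subgroup G D \<and> p_divisible p D}" using D' by blast
      then have "g \<in> max_convex_pdiv p G" unfolding max_convex_pdiv_def .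
      then show False using PD g by blast
    qed
  qed
qed

end



lemma xp_poly:
  fixes c :: "'a::field" and R :: "'a set"
  assumes R: "is_valuation_ring R" and c: "c \<in> R" and p1: "p \<ge> 1"
  shows "\<forall>i. coeff (monom 1 p + [:-c:]) i \<in> R" "lead_coeff (monom 1 p + [:-c:]) = 1"
    "degree (monom 1 p + [:-c:]) = p" "poly (monom 1 p + [:-c:]) x = x^p - c"
proof -
  show "\<forall>i. coeff (monom 1 p + [:-c:]) i \<in> R"
  proof
    fix i show "coeff (monom 1 p + [:-c:]) i \<in> R"
      using vr_basic[OF R] c p1 by (cases i) (auto simp: coeff_monom)
  qed
  show dg: "degree (monom 1 p + [:-c:]) = p"
    by (subst degree_add_eq_left) (use p1 in \<open>auto simp: degree_monom_eq\<close>)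
  show "lead_coeff (monom 1 p + [:-c:]) = 1" unfolding dg using p1
    by (cases p) (auto simp: coeff_monom)
  show "poly (monom 1 p + [:-c:]) x = x^p - c" by (simp add: poly_monom)
qed

lemma p_not_mi:
  fixes R :: "'a::field set"
  assumes rc: "residue_real_closed R" and R: "is_valuation_ring R" and p1: "p \<ge> 1"
  shows "(of_nat p :: 'a) \<notin> max_ideal R"
proof
  assume pm: "(of_nat p :: 'a) \<in> max_ideal R"
  define g :: "nat \<Rightarrow> 'a" where "g i = 1" for i
  have "(\<Sum>i<p. (g i)^2) = of_nat p" unfolding g_def by simp
  then have "\<forall>i<p. g i \<in> max_ideal R" using rrc_sos[OF rc, of p g] pm vr_basic(2)[OF R]
    unfolding g_def by simp
  then have "g 0 \<in> max_ideal R" using p1 by simp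
  then have "(1::'a) \<in> max_ideal R" unfolding g_def by simp
  then show False using one_not_mi[of R] by blast
qed

lemma unit_root:
  fixes R :: "'a::field set"
  assumes hR: "henselian R" and rc: "residue_real_closed R" and p: "prime (p::nat)"
    and u: "u \<in> R" "inverse u \<in> R" "u \<noteq> 0"
  shows "\<exists>w. w^p = u \<or> w^p = -u"
proof -
  have R: "is_valuation_ring R" using hR henselian_vr by blast
  have p2: "p \<ge> 2" using p prime_ge_2_nat by blast
  have un: "u \<notin> max_ideal R" using u mi_iff by blast
  have pn: "(of_nat p :: 'a) \<notin> max_ideal R" using p_not_mi[OF rc R] p2 by simp
  have gen: "\<exists>b. b^p = c" if c: "c \<in> R" "c \<notin> max_ideal R" and a: "a \<in> R" "a^p - c \<in> max_ideal R" for a c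
  proof -
    have an: "a \<notin> max_ideal R"
    proof
      assume am: "a \<in> max_ideal R"
      have "a^p = a^(p-1) * a" using p2 by (simp add: power_eq_if)
      then have "a^p \<in> max_ideal R" using mi_mult[OF R am vr_pow[OF R a(1)]] by simp
      then have "a^p - (a^p - c) \<in> max_ideal R" using mi_diff[OF R _ a(2)] by blast
      then show False using c by simp
    qed
    show ?thesis using hensel_root[OF hR c(1) a(1) a(2) an pn] p2 by simp
  qed
  show ?thesis
  proof (cases "p = 2")
    case True
    have "\<forall>x\<in>R. \<exists>y\<in>R. y^2 - x \<in> max_ideal R \<or> y^2 + x \<in> max_ideal R"
      using rc unfolding residue_real_closed_def by blast
    then obtain y where y: "y \<in> R" "y^2 - u \<in> max_ideal R \<or> y^2 + u \<in> max_ideal R" using u by blast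
    from y(2) show ?thesis
    proof
      assume "y^2 - u \<in> max_ideal R"
      then show ?thesis using gen[OF u(1) un y(1)] True by auto
    next
      assume h: "y^2 + u \<in> max_ideal R"
      have nu: "-u \<notin> max_ideal R" using mi_neg[OF R, of "-u"] un by auto
      have "\<exists>b. b^p = -u" using gen[OF vr_basic(5)[OF R u(1)] nu y(1)] h True by simp
      then show ?thesis by blast
    qed
  next
    case False
    then have odd: "odd p" using p p2 prime_odd_nat by (metis le_neq_implies_less)
    have p1: "p \<ge> 1" using p2 by simp
    note xp = xp_poly[OF R u(1) p1]
    have H: "\<forall>f. (\<forall>i. coeff f i \<in> R) \<longrightarrow> lead_coeff f = 1 \<longrightarrow> odd (degree f) \<longrightarrow>
          (\<exists>a\<in>R. poly f a \<in> max_ideal R)" using rc unfolding residue_real_closed_def by blast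
    have "\<exists>a\<in>R. poly (monom 1 p + [:-u:]) a \<in> max_ideal R"
      by (rule H[rule_format]) (use xp odd in auto)
    then obtain a where a: "a \<in> R" "poly (monom 1 p + [:-u:]) a \<in> max_ideal R" by blast
    then have "a^p - u \<in> max_ideal R" using xp(4) by simp
    then show ?thesis using gen[OF u(1) un a(1)] by auto
  qed
qed



context
  fixes v :: "'a::field \<Rightarrow> 'g::linordered_ab_group_add"
  assumes val: "valuation v"
begin

lemma vmult: "x \<noteq> 0 \<Longrightarrow> y \<noteq> 0 \<Longrightarrow> v (x*y) = v x + v y"
  using val unfolding valuation_def by blast

lemma v1: "v 1 = 0"
proof -
  have "v (1*1) = v 1 + v 1" by (rule vmult) simp_all
  then show ?thesis by simp
qed

lemma vinv: "x \<noteq> 0 \<Longrightarrow> v (inverse x) = - v x"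
proof -
  assume x: "x \<noteq> 0"
  have "v (x * inverse x) = v x + v (inverse x)" by (rule vmult) (use x in auto)
  then have "0 = v x + v (inverse x)" using x v1 by simp
  then show ?thesis by (simp add: eq_neg_iff_add_eq_0 add.commute)
qed

lemma vneg1: "v (-1) = 0"
proof -
  have "v ((-1)*(-1)) = v (-1) + v (-1)" by (rule vmult) simp_all
  then have "v (-1) + v (-1) = 0" using v1 by simp
  then show ?thesis by simp
qed

lemma vneg: "x \<noteq> 0 \<Longrightarrow> v (-x) = v x"
proof -
  assume x: "x \<noteq> 0"
  have "v ((-1)*x) = v (-1) + v x" by (rule vmult) (use x in auto)
  then show ?thesis using vneg1 by simp
qed

lemma vpow: "x \<noteq> 0 \<Longrightarrow> v (x^n) = nsmul n (v x)"
proof (induction n)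
  case 0 then show ?case using v1 by simp
next
  case (Suc n)
  have "v (x * x^n) = v x + v (x^n)" by (rule vmult) (use Suc in auto)
  then show ?case using Suc by simp
qed

lemma vG: "x \<noteq> 0 \<Longrightarrow> v x \<in> value_group v"
  unfolding value_group_def by blast

lemma grpG: "p \<ge> 1 \<Longrightarrow> grp (value_group v) p"
proof
  show "0 \<in> value_group v" using vG[of 1] v1 by simp
next
  fix a b assume "a \<in> value_group v" "b \<in> value_group v"
  then obtain x y where "x \<noteq> 0" "y \<noteq> 0" "a = v x" "b = v y" unfolding value_group_def by blast
  then show "a + b \<in> value_group v" using vmult[of x y] vG[of "x*y"] by simp
next
  fix a assume "a \<in> value_group v"
  then obtain x where "x \<noteq> 0" "a = v x" unfolding value_group_def by blast
  then show "-a \<in> value_group v" using vinv[of x] vG[of "inverse x"] by simp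
qed

lemma inO: "x \<in> val_ring v \<longleftrightarrow> x = 0 \<or> 0 \<le> v x"
  unfolding val_ring_def by simp

lemma inmO: "x \<in> max_ideal (val_ring v) \<longleftrightarrow> x = 0 \<or> 0 < v x"
proof (cases "x = 0")
  case True then show ?thesis by (simp add: mi_iff inO)
next
  case False
  then show ?thesis using vinv[OF False] by (auto simp: mi_iff inO)
qed

end



theorem proposition1p5:
  fixes v :: "'a::field \<Rightarrow> 'g::linordered_ab_group_add" and p :: nat
  assumes "almost_real_closed TYPE('a)"
    and "valuation v"
    and "canonical_henselian_ring (val_ring v)"
    and "prime p"
  shows "{x::'a. phi_p p x} = coarsening_ring v (max_convex_pdiv p (value_group v))"
proof -
  note val = assms(2)
  obtain R :: "'a set" where hR: "henselian R" and rc: "residue_real_closed R"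
    using assms(1) unfolding almost_real_closed_def by blast
  have hO: "henselian (val_ring v)" using assms(3) unfolding canonical_henselian_ring_def by blast
  have OR: "val_ring v \<subseteq> R" using assms(3) hR unfolding canonical_henselian_ring_def by blast
  have Ov: "is_valuation_ring (val_ring v)" using hO henselian_vr by blast
  have p2: "p \<ge> 2" using assms(4) prime_ge_2_nat by blast
  then have p1: "p \<ge> 1" by simp
  define G where "G = value_group v"
  interpret grp G p unfolding G_def by (rule grpG[OF val p1])
  have vG': "x \<noteq> 0 \<Longrightarrow> v x \<in> G" for x unfolding G_def using vG[OF val] by blast
  have F1: "(\<exists>y. y^p = x \<or> y^p = -x) \<longleftrightarrow> Pd p G (v x)" if x: "x \<noteq> 0" for x
  proof
    assume "\<exists>y. y^p = x \<or> y^p = -x"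
    then obtain y where y: "y^p = x \<or> y^p = -x" by blast
    have y0: "y \<noteq> 0" using y x p1 by (auto simp: power_0_left)
    have "v x = v (y^p)"
      using y vneg[OF val x] vneg[OF val, of "-x"] x by auto
    also have "\<dots> = nsmul p (v y)" using vpow[OF val y0] by simp
    finally show "Pd p G (v x)" unfolding Pd_def using vG'[OF y0] by auto
  next
    assume "Pd p G (v x)"
    then obtain h where h: "h \<in> G" "nsmul p h = v x" unfolding Pd_def by blast
    then obtain a where a: "a \<noteq> 0" "h = v a" unfolding G_def value_group_def by blast
    define u where "u = x / a^p"
    have ap: "a^p \<noteq> 0" using a by simp
    have u0: "u \<noteq> 0" using x ap unfolding u_def by simp
    have xu: "x = u * a^p" using ap unfolding u_def by simp
    have "v x = v u + nsmul p (v a)" using vmult[OF val u0 ap] vpow[OF val a(1)] xu by simp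
    then have vu: "v u = 0" using h a by simp
    have "u \<in> R" using OR vu inO[OF val] by auto
    moreover have "inverse u \<in> R" using OR vu inO[OF val] vinv[OF val u0] by auto
    ultimately obtain w where w: "w^p = u \<or> w^p = -u" using unit_root[OF hR rc assms(4) _ _ u0] by blast
    have "(a*w)^p = x \<or> (a*w)^p = -x"
      using w xu by (auto simp: power_mult_distrib mult.commute)
    then show "\<exists>y. y^p = x \<or> y^p = -x" by blast
  qed
  have F2: "\<exists>z. z^p = 1 + x" if x: "0 < v x" for x
  proof -
    have xm: "x \<in> max_ideal (val_ring v)" using inmO[OF val] x by simp
    have xO: "x \<in> val_ring v" using mi_R[OF xm] .
    have c: "1 + x \<in> val_ring v" using vr_basic[OF Ov] xO by blast
    have "1^p - (1 + x) \<in> max_ideal (val_ring v)" using mi_neg[OF Ov xm] by simp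
    then show ?thesis
      using hensel_root[OF hO c vr_basic(2)[OF Ov] _ one_not_mi char_ok[OF hO hR rc assms(4)] p1]
      by blast
  qed
  have F3: "psi_p p x \<longleftrightarrow> x \<noteq> 0 \<and> 0 < v x \<and> \<not> Pd p G (v x)" for x
  proof
    assume ps: "psi_p p x"
    then have n: "\<not> (\<exists>y. y^p = x \<or> y^p = -x)" and z: "\<exists>z. z^p = 1 + x"
      unfolding psi_p_def by blast+
    have x0: "x \<noteq> 0"
    proof
      assume "x = 0" then have "0^p = x" using p1 by (simp add: power_0_left)
      then show False using n by blast
    qed
    have nP: "\<not> Pd p G (v x)" using F1[OF x0] n by blast
    have "0 < v x"
    proof (rule ccontr)
      assume "\<not> 0 < v x"
      moreover have "v x \<noteq> 0" using nP P0 by auto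
      ultimately have neg: "v x < 0" by simp
      have ix: "inverse x \<noteq> 0" using x0 by simp
      have "0 < v (inverse x)" using vinv[OF val x0] neg by simp
      then obtain w where w: "w^p = 1 + inverse x" using F2 by blast
      obtain z where zz: "z^p = 1 + x" using z by blast
      have "1 + inverse x \<noteq> 0"
      proof
        assume "1 + inverse x = 0"
        then have "inverse x = -1" by (simp add: add_eq_0_iff)
        then have "v (inverse x) = 0" using vneg1[OF val] by simp
        then show False using \<open>0 < v (inverse x)\<close> by simp
      qed
      then have w0: "w \<noteq> 0" using w p1 by (auto simp: power_0_left)
      have "1 + x = x * (1 + inverse x)" using x0 by (simp add: field_simps)
      then have "(z / w)^p = x" using zz w w0 \<open>1 + inverse x \<noteq> 0\<close>
        by (simp add: power_divide)
      then show False using n by blast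
    qed
    then show "x \<noteq> 0 \<and> 0 < v x \<and> \<not> Pd p G (v x)" using x0 nP by blast
  next
    assume h: "x \<noteq> 0 \<and> 0 < v x \<and> \<not> Pd p G (v x)"
    then have "\<not> (\<exists>y. y^p = x \<or> y^p = -x)" using F1 by blast
    moreover have "\<exists>z. z^p = 1 + x" using F2 h by blast
    ultimately show "psi_p p x" unfolding psi_p_def by blast
  qed
  have main: "phi_p p x \<longleftrightarrow> x = 0 \<or> 0 \<le> v x \<or> v x \<in> max_convex_pdiv p G" for x
  proof (cases "x = 0")
    case True then show ?thesis unfolding phi_p_def by simp
  next
    case x0: False
    have aG: "v x \<in> G" using vG' x0 .
    show ?thesis
    proof (cases "Pd p G (v x)")
      case True
      have "\<not> psi_p p x" using F3 True by blast
      moreover have "\<exists>y. y^p = x \<or> y^p = -x" using F1[OF x0] True by blast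
      moreover have "(\<forall>z. psi_p p z \<longrightarrow> psi_p p (x * z)) \<longleftrightarrow>
                     (\<forall>g\<in>G. 0 < g \<and> \<not> Pd p G g \<longrightarrow> 0 < v x + g)"
      proof
        assume L: "\<forall>z. psi_p p z \<longrightarrow> psi_p p (x * z)"
        show "\<forall>g\<in>G. 0 < g \<and> \<not> Pd p G g \<longrightarrow> 0 < v x + g"
        proof (intro ballI impI)
          fix g assume g: "g \<in> G" "0 < g \<and> \<not> Pd p G g"
          then obtain z where z: "z \<noteq> 0" "g = v z" unfolding G_def value_group_def by blast
          then have "psi_p p z" using F3 g by blast
          then have "psi_p p (x * z)" using L by blast
          then have "0 < v (x * z)" using F3 by blast
          then show "0 < v x + g" using vmult[OF val x0 z(1)] z by simp
        qed
      next
        assume Rr: "\<forall>g\<in>G. 0 < g \<and> \<not> Pd p G g \<longrightarrow> 0 < v x + g"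
        show "\<forall>z. psi_p p z \<longrightarrow> psi_p p (x * z)"
        proof (intro allI impI)
          fix z :: 'a assume "psi_p p z"
          then have z: "z \<noteq> 0" "0 < v z" "\<not> Pd p G (v z)" using F3 by blast+
          have xz: "x * z \<noteq> 0" using x0 z by simp
          have vxz: "v (x * z) = v x + v z" using vmult[OF val x0 z(1)] .
          have "0 < v (x * z)" using Rr vG'[OF z(1)] z vxz by simp
          moreover have "\<not> Pd p G (v (x * z))"
          proof
            assume "Pd p G (v (x * z))"
            then have "Pd p G (v (x*z) - v x)" using Pdiff True by blast
            then show False using z(3) vxz by simp
          qed
          ultimately show "psi_p p (x * z)" using F3 xz by blast
        qed
      qed
      ultimately have "phi_p p x \<longleftrightarrow> (\<forall>g\<in>G. 0 < g \<and> \<not> Pd p G g \<longrightarrow> 0 < v x + g)"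
        unfolding phi_p_def using x0 by blast
      then show ?thesis using GL2[OF aG] x0 by simp
    next
      case False
      have "\<not> (\<exists>y. y^p = x \<or> y^p = -x)" using F1[OF x0] False by blast
      then have "phi_p p x \<longleftrightarrow> 0 < v x" unfolding phi_p_def using F3 False x0 by blast
      moreover have "v x \<notin> max_convex_pdiv p G" using PD False by blast
      moreover have "v x \<noteq> 0" using False P0 by auto
      ultimately show ?thesis using x0 by auto
    qed
  qed
  show ?thesis
    unfolding G_def[symmetric]
  proof (rule set_eqI)
    fix x
    show "x \<in> {x. phi_p p x} \<longleftrightarrow> x \<in> coarsening_ring v (max_convex_pdiv p G)"
      using main[of x] unfolding coarsening_ring_def by simp
  qed
qed



end
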